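(* Let $F:\mathbb{R}\to(0,1)$ be a continuous, strictly increasing cumulative distribution function with $\lim_{u\to-\infty}F(u)=0$ and $\lim_{u\to+\infty}F(u)=1$, so that $F^{-1}:(0,1)\to\mathbb{R}$ exists and is continuous and strictly increasing. Define the mirror map $\Phi:(0,1)^m\to\mathbb{R}$ by $\Phi(\boldsymbol\theta)=\sum_{i=1}^m\int_{1/2}^{\theta_i}F^{-1}(u)\,du$ and its Bregman divergence $D_\Phi(\boldsymbol\theta,\boldsymbol\theta')=\Phi(\boldsymbol\theta)-\Phi(\boldsymbol\theta')-\langle\nabla\Phi(\boldsymbol\theta'),\boldsymbol\theta-\boldsymbol\theta'\rangle$. Let $\boldsymbol\eta^t\in\mathbb{R}^m$, $\boldsymbol\theta^t=F(\boldsymbol\eta^t)$ (coordinate-wise), $\mathbf{g}^t\in\mathbb{R}^m$ arbitrary and $\varepsilon>0$. Then the (stochastic) mirror descent step $$\boldsymbol\theta^{t+1}=\arg\min_{\boldsymbol\theta\in(0,1)^m}\Big\{\langle\mathbf{g}^t,\boldsymbol\theta-\boldsymbol\theta^t\rangle+\tfrac1\varepsilon D_\Phi(\boldsymbol\theta,\boldsymbol\theta^t)\Big\}$$ has a unique solution, and it equals $F(\boldsymbol\eta^{t+1})$ where $\boldsymbol\eta^{t+1}=\boldsymbol\eta^t-\varepsilon\mathbf{g}^t$. In particular, plain SGD on the latent weights $\boldsymbol\eta$, $\boldsymbol\eta^{t+1}=\boldsymbol\eta^t-\varepsilon\hat{\mathbf g}^t$, where $\hat{\mathbf g}^t$ is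 the identity straight-through-weights estimate (defined in the context) computed at $\boldsymbol\eta^t$, implements stochastic mirror descent in the weight probabilities $\boldsymbol\theta=F(\boldsymbol\eta)$ with divergence $D_\Phi$ and stochastic gradient $\hat{\mathbf g}^t$.
   Context: Binary weights $\mathbf{w}\in\{-1,1\}^m$ have independent coordinates with $P(w_i=1)=\theta_i$; they are modelled as $w_i=\mathrm{sign}(\eta_i-z_i)$ with independent noises $z_i$ of cdf $F$, so $\theta_i=F(\eta_i)$; the $\eta_i\in\mathbb{R}$ are called latent weights. For a differentiable loss $\mathcal{L}:\mathbb{R}^m\to\mathbb{R}$ one wishes to minimize $\mathbb{E}_{\mathbf{w}}[\mathcal{L}(\mathbf{w})]$ over $\boldsymbol\theta\in[0,1]^m$. The identity straight-through-weights estimator: on the forward pass sample $\mathbf{w}$ with $P(w_i=1)=F(\eta_i)$; on the backward pass set the gradient with respect to $\boldsymbol\eta$ to $\hat{\mathbf g}=2\nabla_{\mathbf w}\mathcal{L}(\mathbf{w})$ (i.e., the factor $F'(\eta_i)$ of the chain rule is omitted); $\hat{\mathbf g}$ serves as a (straight-through) estimate of $\nabla_{\boldsymbol\theta}\mathbb{E}_{\mathbf w}[\mathcal{L}(\mathbf w)]$. *)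

theory Defs
  imports "HOL-Analysis.Analysis"
begin

definition open_cube :: "(real ^ 'm) set" where
  "open_cube = {\<theta>. \<forall>i. 0 < \<theta> $ i \<and> \<theta> $ i < 1}"

text \<open>Mirror map: Phi(theta) = sum_i integral from 1/2 to theta_i of F^{-1}(u) du
  (oriented interval integral; F^{-1} = inv F).\<close>
definition mirror_map :: "(real \<Rightarrow> real) \<Rightarrow> real ^ 'm \<Rightarrow> real" where
  "mirror_map F \<theta> = (\<Sum>i\<in>UNIV. (LBINT u = ereal (1/2)..ereal (\<theta> $ i). inv F u))"

text \<open>Bregman divergence, with the gradient term given by the Frechet derivative of Phi
  at theta' applied to theta - theta', i.e. the inner product with grad Phi(theta').\<close>
definition bregman :: "(real \<Rightarrow> real) \<Rightarrow> real ^ 'm \<Rightarrow> real ^ 'm \<Rightarrow> real" where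
  "bregman F \<theta> \<theta>' = mirror_map F \<theta> - mirror_map F \<theta>'
     - frechet_derivative (mirror_map F) (at \<theta>') (\<theta> - \<theta>')"

definition md_objective ::
  "(real \<Rightarrow> real) \<Rightarrow> real \<Rightarrow> real ^ 'm \<Rightarrow> real ^ 'm \<Rightarrow> real ^ 'm \<Rightarrow> real" where
  "md_objective F \<epsilon> g \<theta>t \<theta> = inner g (\<theta> - \<theta>t) + (1 / \<epsilon>) * bregman F \<theta> \<theta>t"

end

theory Submission
  imports Defs
begin

locale cdfF =
  fixes F :: "real \<Rightarrow> real"
  assumes cont: "continuous_on UNIV F"
    and sm: "strict_mono F"
    and rng: "\<And>x. 0 < F x \<and> F x < 1"
    and lb: "(F \<longlongrightarrow> 0) at_bot"
    and lt: "(F \<longlongrightarrow> 1) at_top"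
begin

lemma inj: "inj F" using sm strict_mono_on_imp_inj_on by blast

lemma GF: "inv F (F x) = x" using inj by simp

lemma isc: "isCont F x" using cont by (simp add: continuous_on_eq_continuous_at)

lemma surj01: assumes "0 < u" "u < 1" shows "\<exists>x. F x = u"
proof -
  have "\<forall>\<^sub>F x in at_bot. F x < u" using lb assms by (simp add: order_tendstoD(2))
  then obtain a where a: "F a < u" by (meson eventually_at_bot_linorder order_refl)
  have "\<forall>\<^sub>F x in at_top. F x > u" using lt assms by (simp add: order_tendstoD(1))
  then obtain b where b: "F b > u" by (meson eventually_at_top_linorder order_refl)
  have "a \<le> b" using a b sm by (metis less_le_not_le linorder_le_less_linear strict_mono_less order_less_trans)
  then show ?thesis using IVT[of F a u b] a b isc by auto
qed

lemma FG: assumes "0 < u" "u < 1" shows "F (inv F u) = u"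
  using surj01[OF assms] GF by metis

lemma G_less: assumes "0 < u" "u < 1" "0 < v" "v < 1" shows "inv F u < inv F v \<longleftrightarrow> u < v"
  using FG[OF assms(1,2)] FG[OF assms(3,4)] sm by (metis strict_mono_less)

lemma G_cont: assumes "0 < u" "u < 1" shows "isCont (inv F) u"
proof -
  obtain x where x: "F x = u" using surj01 assms by blast
  have "isCont (inv F) (F x)"
    by (rule isCont_inverse_function[of 1]) (auto simp: GF isc)
  then show ?thesis using x by simp
qed

definition phi :: "real \<Rightarrow> real" where
  "phi x = (LBINT u = ereal (1/2)..ereal x. inv F u)"

lemma phi_deriv: assumes "0 < x" "x < 1" shows "(phi has_real_derivative inv F x) (at x)"
proof -
  define a where "a = min (1/2) x / 2"
  define b where "b = (max (1/2) x + 1) / 2"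
  have ab: "0 < a" "b < 1" "a < x" "x < b" "a \<le> 1/2" "1/2 \<le> b"
    using assms by (auto simp: a_def b_def)
  have "continuous_on {a..b} (inv F)"
    using ab by (intro continuous_at_imp_continuous_on ballI G_cont) auto
  from interval_integral_FTC2[OF ab(5,6) this, of x] ab
  have "((\<lambda>u. LBINT y=ereal (1/2)..ereal u. inv F y) has_vector_derivative inv F x) (at x within {a..b})"
    by (metis less_imp_le)
  moreover have "at x within {a..b} = at x" using ab by (intro at_within_interior) auto
  ultimately show ?thesis
    unfolding phi_def[abs_def] has_real_derivative_iff_has_vector_derivative by metis
qed

lemma mm_eq: "mirror_map F = (\<lambda>\<theta>. \<Sum>i\<in>UNIV. phi (\<theta> $ i))"
  by (simp add: mirror_map_def[abs_def] phi_def)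

lemma mm_deriv:
  assumes "\<theta>' \<in> open_cube"
  shows "(mirror_map F has_derivative (\<lambda>h. \<Sum>i\<in>UNIV. inv F (\<theta>' $ i) * h $ i)) (at \<theta>')"
proof -
  have "((\<lambda>\<theta>. phi (\<theta> $ i)) has_derivative (\<lambda>h. inv F (\<theta>' $ i) * h $ i)) (at \<theta>')" for i
  proof -
    have d: "(phi has_derivative (*) (inv F (\<theta>' $ i))) (at (\<theta>' $ i))"
      using assms phi_deriv[of "\<theta>' $ i"] has_field_derivative_imp_has_derivative
      by (auto simp: open_cube_def)
    have "((\<lambda>\<theta>::real^'a. \<theta> $ i) has_derivative (\<lambda>h. h $ i)) (at \<theta>')"
      by (rule bounded_linear.has_derivative[OF bounded_linear_vec_nth has_derivative_ident])
    from has_derivative_compose[OF this d] show ?thesis .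
  qed
  then show ?thesis unfolding mm_eq by (intro has_derivative_sum) auto
qed

definition q :: "real \<Rightarrow> real \<Rightarrow> real \<Rightarrow> real \<Rightarrow> real" where
  "q \<epsilon> gi ei x = gi*(x - F ei) + (1/\<epsilon>)*(phi x - phi (F ei) - ei*(x - F ei))"

lemma obj_eq:
  fixes \<eta> g :: "real ^ 'm"
  shows "md_objective F \<epsilon> g (\<chi> i. F (\<eta> $ i)) \<theta> = (\<Sum>i\<in>UNIV. q \<epsilon> (g$i) (\<eta>$i) (\<theta> $ i))"
proof -
  have c: "(\<chi> i. F (\<eta> $ i)) \<in> open_cube" using rng by (simp add: open_cube_def)
  have fd: "frechet_derivative (mirror_map F) (at (\<chi> i. F (\<eta> $ i))) =
     (\<lambda>h. \<Sum>i\<in>UNIV. inv F ((\<chi> i. F (\<eta> $ i)) $ i) * h $ i)"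
    using frechet_derivative_at[OF mm_deriv[OF c]] by simp
  show ?thesis
    unfolding md_objective_def bregman_def fd
    by (simp add: mm_eq inner_vec_def q_def GF sum_subtractf sum_distrib_left sum.distrib
        algebra_simps)
qed

lemma q_deriv: assumes "0 < y" "y < 1"
  shows "(q \<epsilon> gi ei has_real_derivative (gi + (1/\<epsilon>)*(inv F y - ei))) (at y)"
proof -
  have "((\<lambda>x. gi*(x - F ei) + (1/\<epsilon>)*(phi x - phi (F ei) - ei*(x - F ei))) has_real_derivative
     gi*(1 - 0) + (1/\<epsilon>)*(inv F y - 0 - ei*(1 - 0))) (at y)"
    by (intro DERIV_add DERIV_cmult DERIV_diff DERIV_ident DERIV_const phi_deriv[OF assms])
  then show ?thesis unfolding q_def[abs_def] by (simp add: algebra_simps)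
qed

lemma q_strict:
  assumes "\<epsilon> > 0" "0 < x" "x < 1" "x \<noteq> F (ei - \<epsilon>*gi)"
  shows "q \<epsilon> gi ei (F (ei - \<epsilon>*gi)) < q \<epsilon> gi ei x"
proof -
  define xs where "xs = F (ei - \<epsilon>*gi)"
  have xs: "0 < xs" "xs < 1" "inv F xs = ei - \<epsilon>*gi" using rng GF by (auto simp: xs_def)
  have D: "\<And>y. a \<le> y \<Longrightarrow> y \<le> b \<Longrightarrow> DERIV (q \<epsilon> gi ei) y :> (gi + (1/\<epsilon>)*(inv F y - ei))"
    if "0 < a" "b < 1" for a b using q_deriv that by auto
  have dv: "gi + (1/\<epsilon>)*(inv F z - ei) = (inv F z - inv F xs) / \<epsilon>" for z
    using xs(3) assms(1) by (simp add: field_simps)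
  show ?thesis
  proof (cases "x < xs")
    case True
    from MVT2[OF True D[OF assms(2) xs(2)]] obtain z where
      z: "x < z" "z < xs" "q \<epsilon> gi ei xs - q \<epsilon> gi ei x = (xs - x) * (gi + (1/\<epsilon>)*(inv F z - ei))"
      by blast
    have "inv F z < inv F xs" using G_less[of z xs] z xs assms by auto
    then have "(xs - x) * (gi + (1/\<epsilon>)*(inv F z - ei)) < 0"
      unfolding dv using True assms(1) by (simp add: mult_pos_neg divide_neg_pos)
    then show ?thesis using z(3) xs_def by simp
  next
    case False
    then have F: "xs < x" using assms(4) xs_def by auto
    from MVT2[OF F D[OF xs(1) assms(3)]] obtain z where
      z: "xs < z" "z < x" "q \<epsilon> gi ei x - q \<epsilon> gi ei xs = (x - xs) * (gi + (1/\<epsilon>)*(inv F z - ei))"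
      by blast
    have "inv F xs < inv F z" using G_less[of xs z] z xs assms by auto
    then have "(x - xs) * (gi + (1/\<epsilon>)*(inv F z - ei)) > 0"
      unfolding dv using F assms(1) by simp
    then show ?thesis using z(3) xs_def by simp
  qed
qed

end

theorem proposition1:
  fixes F :: "real \<Rightarrow> real" and \<eta> g :: "real ^ 'm" and \<epsilon> :: real
  assumes "continuous_on UNIV F"
    and "strict_mono F"
    and "\<And>x. 0 < F x \<and> F x < 1"
    and "(F \<longlongrightarrow> 0) at_bot"
    and "(F \<longlongrightarrow> 1) at_top"
    and "\<epsilon> > 0"
  shows "{\<theta> \<in> open_cube. \<forall>\<theta>'\<in>open_cube.
            md_objective F \<epsilon> g (\<chi> i. F (\<eta> $ i)) \<theta>
              \<le> md_objective F \<epsilon> g (\<chi> i. F (\<eta> $ i)) \<theta>'}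
         = {\<chi> i. F ((\<eta> - \<epsilon> *\<^sub>R g) $ i)}"
proof -
  interpret cdfF F using assms(1-5) by unfold_locales
  define ts :: "real ^ 'm" where "ts = (\<chi> i. F ((\<eta> - \<epsilon> *\<^sub>R g) $ i))"
  let ?O = "md_objective F \<epsilon> g (\<chi> i. F (\<eta> $ i))"
  have tsi: "ts $ i = F (\<eta>$i - \<epsilon>*g$i)" for i by (simp add: ts_def)
  have tsc: "ts \<in> open_cube" using rng by (simp add: open_cube_def tsi)
  have le: "q \<epsilon> (g$i) (\<eta>$i) (ts $ i) \<le> q \<epsilon> (g$i) (\<eta>$i) (\<theta> $ i)" if "\<theta> \<in> open_cube" for \<theta> i
    using q_strict[OF assms(6), of "\<theta> $ i" "\<eta>$i" "g$i"] that
    by (cases "\<theta> $ i = ts $ i") (auto simp: open_cube_def tsi)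
  have min: "?O ts \<le> ?O \<theta>" if "\<theta> \<in> open_cube" for \<theta>
    unfolding obj_eq using le[OF that] by (intro sum_mono) auto
  have strict: "?O ts < ?O \<theta>" if th: "\<theta> \<in> open_cube" "\<theta> \<noteq> ts" for \<theta>
  proof -
    obtain j where j: "\<theta> $ j \<noteq> ts $ j" using th(2) by (metis vec_eq_iff)
    have "q \<epsilon> (g$j) (\<eta>$j) (ts $ j) < q \<epsilon> (g$j) (\<eta>$j) (\<theta> $ j)"
      using q_strict[OF assms(6), of "\<theta> $ j" "\<eta>$j" "g$j"] th j
      by (auto simp: open_cube_def tsi)
    then show ?thesis unfolding obj_eq
      by (intro sum_strict_mono_ex1) (use le[OF th(1)] in auto)
  qed
  show ?thesis unfolding ts_def[symmetric]
  proof (rule set_eqI, rule iffI)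
    fix \<theta> assume "\<theta> \<in> {\<theta> \<in> open_cube. \<forall>\<theta>'\<in>open_cube. ?O \<theta> \<le> ?O \<theta>'}"
    then have "\<theta> \<in> open_cube" "?O \<theta> \<le> ?O ts" using tsc by auto
    then have "\<theta> = ts" using strict by force
    then show "\<theta> \<in> {ts}" by simp
  next
    fix \<theta> assume "\<theta> \<in> {ts}"
    then show "\<theta> \<in> {\<theta> \<in> open_cube. \<forall>\<theta>'\<in>open_cube. ?O \<theta> \<le> ?O \<theta>'}"
      using tsc min by auto
  qed
qed

end
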